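(* Let $G=(V,E)$ be a weighted undirected graph with $n$ labeled vertices and let $k\ge1$. The running time of Algorithm 2 (described in the context), with priority queues implemented as Fibonacci heaps, is $O(k|E|+k|V|\log|V|)$.
   Context: Fibonacci heap: insert and decrease-key cost $O(1)$ amortized, pop-minimum costs $O(\log$ size$)$. Algorithm 2: input an undirected graph $G=(V,E,w)$ with non-negative weights, labeled set $\mathcal L\subseteq V$, and $k$. It keeps a global min-priority queue $Q$ of vertices and, for each $v\in V$, a local min-priority queue $Q_v$ of seeds, a list kNN$[v]$ (initially empty) and a set $S_v$ (initially empty). Initially for each $v\in\mathcal L$: insert $v$ into $Q$ with priority $0$ and $v$ into $Q_v$ with priority $0$. While $Q$ is nonempty: pop the minimum $(v_0,\mathrm{dist})$ from $Q$; pop the minimum $(\mathrm{seed},\mathrm{dist})$ from $Q_{v_0}$; add $\mathrm{seed}$ to $S_{v_0}$; append $(\mathrm{seed},\mathrm{dist})$ to kNN$[v_0]$; if kNN$[v_0]$ has fewer than $k$ entries and $Q_{v_0}$ is nonempty, insert $v_0$ into $Q$ with priority equal to the current minimum priority of $Q_{v_0}$; then for every neighbour $v$ of $v_0$ with fewer than $k$ entries in kNN$[v]$ and $\mathrm{seed}\notin S_v$, perform decrease-or-insert of $\mathrm{seed}$ in $Q_v$ and of $v$ in $Q$, both with priority $\mathrm{dist}+w(v_0,v)$ (lower the priority if present, otherwise insert). *)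

theory Defs
  imports Main "HOL.Transcendental"
begin

text \<open>Cost model and state-transition semantics of Algorithm 2.
  Vertices are natural numbers; an undirected graph is a set E of two-element
  vertex sets; w assigns a weight to each edge.  Priority queues are modelled
  as partial maps (element to priority).  Costs are charged as for Fibonacci
  heaps (amortized): insert / decrease-key cost 1, pop-minimum costs
  1 + log2(size); every other elementary operation costs 1.\<close>

record alg_state =
  gQ   :: "nat \<Rightarrow> real option"
  lQ   :: "nat \<Rightarrow> nat \<Rightarrow> real option"
  kNN  :: "nat \<Rightarrow> (nat \<times> real) list"
  seen :: "nat \<Rightarrow> nat set"

definition pop_cost :: "nat \<Rightarrow> real" where
  "pop_cost s = 1 + log 2 (max 1 (real s))"

definition nbrs :: "nat set set \<Rightarrow> nat \<Rightarrow> nat set" where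
  "nbrs E v0 = {v. {v0, v} \<in> E}"

definition is_min_entry :: "('a \<Rightarrow> real option) \<Rightarrow> 'a \<Rightarrow> real \<Rightarrow> bool" where
  "is_min_entry m x d \<longleftrightarrow> m x = Some d \<and> (\<forall>y q. m y = Some q \<longrightarrow> d \<le> q)"

definition dec_or_ins :: "real option \<Rightarrow> real \<Rightarrow> real option" where
  "dec_or_ins old p = Some (case old of None \<Rightarrow> p | Some q \<Rightarrow> min q p)"

definition alg_init :: "nat set \<Rightarrow> alg_state" where
  "alg_init L = \<lparr> gQ = (\<lambda>v. if v \<in> L then Some 0 else None),
                  lQ = (\<lambda>v. if v \<in> L then [v \<mapsto> 0] else Map.empty),
                  kNN = (\<lambda>_. []),
                  seen = (\<lambda>_. {}) \<rparr>"

text \<open>Cost of the initialisation: create per-vertex structures and insert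
  every labeled vertex into Q and into its own local queue.\<close>
definition init_cost :: "nat set \<Rightarrow> nat set \<Rightarrow> real" where
  "init_cost V L = real (card V) + 2 * real (card L)"

text \<open>Ties in pop-minimum are resolved arbitrarily.\<close>
definition alg_step ::
  "nat set set \<Rightarrow> (nat set \<Rightarrow> real) \<Rightarrow> nat \<Rightarrow> alg_state \<Rightarrow> real \<Rightarrow> alg_state \<Rightarrow> bool" where
  "alg_step E w k st c st' \<longleftrightarrow>
    (\<exists>v0 d seed d'.
       is_min_entry (gQ st) v0 d \<and>
       is_min_entry (lQ st v0) seed d' \<and>
       (let Q1 = (gQ st)(v0 := None);
            Qv1 = (lQ st)(v0 := (lQ st v0)(seed := None));
            S1 = (seen st)(v0 := insert seed (seen st v0));
            K1 = (kNN st)(v0 := kNN st v0 @ [(seed, d')]);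
            Q2 = (if length (K1 v0) < k \<and> Qv1 v0 \<noteq> Map.empty
                  then Q1(v0 := Some (Min (ran (Qv1 v0)))) else Q1);
            upd = (\<lambda>v. v \<in> nbrs E v0 \<and> length (K1 v) < k \<and> seed \<notin> S1 v)
        in st' = \<lparr> gQ = (\<lambda>v. if upd v then dec_or_ins (Q2 v) (d' + w {v0, v}) else Q2 v),
                   lQ = (\<lambda>v. if upd v
                              then (Qv1 v)(seed := dec_or_ins (Qv1 v seed) (d' + w {v0, v}))
                              else Qv1 v),
                   kNN = K1,
                   seen = S1 \<rparr>
           \<and> c = pop_cost (card (dom (gQ st))) + pop_cost (card (dom (lQ st v0)))
                 + 1 + real (card (nbrs E v0))))"

text \<open>Finite executions (any prefix of a run) with accumulated cost.\<close>
inductive alg_run ::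
  "nat set set \<Rightarrow> (nat set \<Rightarrow> real) \<Rightarrow> nat \<Rightarrow> alg_state \<Rightarrow> real \<Rightarrow> alg_state \<Rightarrow> bool"
  for E w k where
  run_nil: "alg_run E w k s 0 s"
| run_step: "alg_step E w k s c s' \<Longrightarrow> alg_run E w k s' c' s'' \<Longrightarrow> alg_run E w k s (c + c') s''"

end

theory Submission imports Defs begin

lemma deg_le: assumes "finite E" shows "card (nbrs E v) \<le> card {e\<in>E. v \<in> e}"
proof -
  have "inj_on (\<lambda>u. {v,u}) (nbrs E v)" by (auto simp: inj_on_def doubleton_eq_iff)
  moreover have "(\<lambda>u. {v,u}) ` nbrs E v \<subseteq> {e\<in>E. v \<in> e}" by (auto simp: nbrs_def)
  ultimately show ?thesis using card_inj_on_le assms by fastforce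
qed

lemma handshake: assumes "finite V" "\<forall>e\<in>E. e \<subseteq> V \<and> card e = 2"
  shows "(\<Sum>v\<in>V. card (nbrs E v)) \<le> 2 * card E"
proof -
  have fE: "finite E" using assms by (meson finite_Pow_iff finite_subset Pow_iff subsetI)
  have "(\<Sum>v\<in>V. card (nbrs E v)) \<le> (\<Sum>v\<in>V. card {e\<in>E. v \<in> e})"
    by (rule sum_mono) (rule deg_le[OF fE])
  also have "\<dots> = (\<Sum>v\<in>V. \<Sum>e\<in>E. if v \<in> e then 1 else 0)"
    by (rule sum.cong) (auto simp: sum.If_cases fE Int_def)
  also have "\<dots> = (\<Sum>e\<in>E. \<Sum>v\<in>V. if v \<in> e then 1 else 0)" by (rule sum.swap)
  also have "\<dots> = (\<Sum>e\<in>E. card e)"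
  proof (rule sum.cong)
    fix e assume "e \<in> E"
    then have "e \<subseteq> V" using assms by auto
    then have "V \<inter> e = e" by auto
    then show "(\<Sum>v\<in>V. if v \<in> e then 1 else 0) = card e"
      using assms(1) by (simp add: sum.If_cases)
  qed simp
  also have "\<dots> = 2 * card E" using assms by simp
  finally show ?thesis .
qed

definition inv :: "nat set \<Rightarrow> nat \<Rightarrow> alg_state \<Rightarrow> bool" where
  "inv V k st \<longleftrightarrow> (\<forall>v. gQ st v \<noteq> None \<longrightarrow> v \<in> V \<and> length (kNN st v) < k) \<and> (\<forall>v. dom (lQ st v) \<subseteq> V)"

definition phi :: "nat set \<Rightarrow> nat set set \<Rightarrow> nat \<Rightarrow> real \<Rightarrow> alg_state \<Rightarrow> real" where
  "phi V E k A st = (\<Sum>v\<in>V. real (k - length (kNN st v)) * (A + real (card (nbrs E v))))"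

lemma step_facts:
  assumes "alg_step E w k st c st'"
  shows "\<exists>v0 d seed d'. gQ st v0 = Some d \<and> lQ st v0 seed = Some d' \<and>
     kNN st' = (kNN st)(v0 := kNN st v0 @ [(seed,d')]) \<and>
     c = pop_cost (card (dom (gQ st))) + pop_cost (card (dom (lQ st v0))) + 1 + real (card (nbrs E v0)) \<and>
     (\<forall>v. gQ st' v \<noteq> None \<longrightarrow> (v \<in> nbrs E v0 \<and> length (kNN st' v) < k) \<or> (v = v0 \<and> length (kNN st' v0) < k) \<or> (v \<noteq> v0 \<and> gQ st v \<noteq> None)) \<and>
     (\<forall>v. dom (lQ st' v) \<subseteq> dom (lQ st v) \<union> {seed})"
  using assms unfolding alg_step_def Let_def is_min_entry_def
  apply (elim exE conjE)
  subgoal for v0 d seed d'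
    apply (rule exI[of _ v0], rule exI[of _ d], rule exI[of _ seed], rule exI[of _ d'])
    apply (auto simp: dec_or_ins_def split: if_splits)
    done
  done


lemma pop_le: assumes "s \<le> n" shows "pop_cost s \<le> 1 + log 2 (max 1 (real n))"
  unfolding pop_cost_def using assms by (simp add: log_le_cancel_iff)

lemma step_lemma:
  assumes fV: "finite V" and EV: "\<forall>e\<in>E. e \<subseteq> V \<and> card e = 2"
    and I: "inv V k st" and S: "alg_step E w k st c st'"
    and A: "A = 3 + 2 * log 2 (max 1 (real (card V)))"
  shows "inv V k st' \<and> c + phi V E k A st' \<le> phi V E k A st"
proof -
  obtain v0 d seed d' where g: "gQ st v0 = Some d" and l: "lQ st v0 seed = Some d'"
    and K: "kNN st' = (kNN st)(v0 := kNN st v0 @ [(seed,d')])"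
    and c: "c = pop_cost (card (dom (gQ st))) + pop_cost (card (dom (lQ st v0))) + 1 + real (card (nbrs E v0))"
    and G: "\<forall>v. gQ st' v \<noteq> None \<longrightarrow> (v \<in> nbrs E v0 \<and> length (kNN st' v) < k) \<or> (v = v0 \<and> length (kNN st' v0) < k) \<or> (v \<noteq> v0 \<and> gQ st v \<noteq> None)"
    and Ld: "\<forall>v. dom (lQ st' v) \<subseteq> dom (lQ st v) \<union> {seed}"
    using step_facts[OF S] by (elim exE conjE) (rule that; assumption)
  have v0V: "v0 \<in> V" and lt: "length (kNN st v0) < k" using I g unfolding inv_def by auto
  have seedV: "seed \<in> V" using I l unfolding inv_def by blast
  have nbV: "v \<in> V" if "v \<in> nbrs E v0" for v using that EV unfolding nbrs_def by blast
  have inv': "inv V k st'"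
    unfolding inv_def
  proof (rule conjI; intro allI impI)
    fix v assume "gQ st' v \<noteq> None"
    then show "v \<in> V \<and> length (kNN st' v) < k"
    proof (cases "v = v0")
      case True then show ?thesis using G v0V \<open>gQ st' v \<noteq> None\<close> nbV by blast
    next
      case False
      then have "kNN st' v = kNN st v" using K by simp
      then show ?thesis using G nbV I False \<open>gQ st' v \<noteq> None\<close> unfolding inv_def by auto
    qed
  next
    fix v show "dom (lQ st' v) \<subseteq> V" using Ld I seedV unfolding inv_def by blast
  qed
  have M0: "log 2 (max 1 (real (card V))) \<ge> 0" by simp
  have c1: "card (dom (gQ st)) \<le> card V"
    using I fV unfolding inv_def by (intro card_mono) auto
  have c2: "card (dom (lQ st v0)) \<le> card V"
    using I fV unfolding inv_def by (intro card_mono) auto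
  have cle: "c \<le> A + real (card (nbrs E v0))"
    using pop_le[OF c1] pop_le[OF c2] c A by linarith
  define f :: "alg_state \<Rightarrow> nat \<Rightarrow> real" where "f s v = real (k - length (kNN s v)) * (A + real (card (nbrs E v)))" for s v
  have p1: "phi V E k A st = f st v0 + (\<Sum>v\<in>V-{v0}. f st v)"
    unfolding phi_def f_def using fV v0V by (simp add: sum.remove)
  have p2: "phi V E k A st' = f st' v0 + (\<Sum>v\<in>V-{v0}. f st' v)"
    unfolding phi_def f_def using fV v0V by (simp add: sum.remove)
  have eq: "(\<Sum>v\<in>V-{v0}. f st' v) = (\<Sum>v\<in>V-{v0}. f st v)"
    by (rule sum.cong) (auto simp: f_def K)
  have "real (k - length (kNN st' v0)) = real (k - length (kNN st v0)) - 1"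
    using lt K by (simp add: of_nat_diff)
  then have "f st' v0 = (real (k - length (kNN st v0)) - 1) * (A + real (card (nbrs E v0)))"
    unfolding f_def by (simp only:)
  also have "\<dots> = f st v0 - (A + real (card (nbrs E v0)))"
    unfolding f_def by (simp only: left_diff_distrib mult_1_left)
  finally have "f st' v0 = f st v0 - (A + real (card (nbrs E v0)))" .
  then show ?thesis using inv' p1 p2 eq cle by linarith
qed

lemma run_lemma:
  assumes "alg_run E w k s c s'" "finite V" "\<forall>e\<in>E. e \<subseteq> V \<and> card e = 2"
    "inv V k s" "A = 3 + 2 * log 2 (max 1 (real (card V)))"
  shows "c + phi V E k A s' \<le> phi V E k A s"
  using assms
proof (induction rule: alg_run.induct)
  case (run_nil s) then show ?case by simp
next
  case (run_step s c s' c' s'')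
  have st: "inv V k s' \<and> c + phi V E k A s' \<le> phi V E k A s"
    by (rule step_lemma[OF run_step.prems(1,2,3) run_step.hyps(1) run_step.prems(4)])
  have "c' + phi V E k A s'' \<le> phi V E k A s'"
    using run_step.IH run_step.prems(1,2,4) st by blast
  then show ?case using st by linarith
qed


lemma phi_nonneg: assumes "A \<ge> 0" shows "phi V E k A st \<ge> 0"
  unfolding phi_def using assms by (intro sum_nonneg) simp

theorem theoremB3:
  "\<exists>C>0. \<forall>(V::nat set) (E::nat set set) (w::nat set \<Rightarrow> real) (L::nat set) (k::nat) st c.
      finite V \<and> (\<forall>e\<in>E. e \<subseteq> V \<and> card e = 2) \<and> (\<forall>e\<in>E. w e \<ge> 0) \<and>
      L \<subseteq> V \<and> k \<ge> 1 \<and> alg_run E w k (alg_init L) c st \<longrightarrow>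
      init_cost V L + c \<le>
        C * (real k * real (card E) + real k * real (card V) * max 1 (log 2 (real (card V))))"
proof (intro exI[of _ 8] conjI allI impI)
  fix V E w L k st c
  assume H: "finite V \<and> (\<forall>e\<in>E. e \<subseteq> V \<and> card e = 2) \<and> (\<forall>e\<in>E. w e \<ge> 0) \<and>
      L \<subseteq> V \<and> k \<ge> 1 \<and> alg_run E w k (alg_init L) c st"
  then have fV: "finite V" and EV: "\<forall>e\<in>E. e \<subseteq> V \<and> card e = 2" and LV: "L \<subseteq> V"
    and k1: "k \<ge> 1" and R: "alg_run E w k (alg_init L) c st" by auto
  define M0 where "M0 = log 2 (max 1 (real (card V)))"
  define M where "M = max 1 (log 2 (real (card V)))"
  define A where "A = 3 + 2 * M0"
  have M0pos: "M0 \<ge> 0" unfolding M0_def by simp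
  have M0M: "M0 \<le> M"
  proof (cases "card V = 0")
    case True then show ?thesis unfolding M0_def M_def by simp
  next
    case False then have "max 1 (real (card V)) = real (card V)" by simp
    then show ?thesis unfolding M0_def M_def by simp
  qed
  have M1: "M \<ge> 1" unfolding M_def by simp
  have I0: "inv V k (alg_init L)" using LV k1 unfolding inv_def alg_init_def by auto
  have run: "c + phi V E k A st \<le> phi V E k A (alg_init L)"
    by (rule run_lemma[OF R fV EV I0]) (simp add: A_def M0_def)
  have "phi V E k A st \<ge> 0" using M0pos A_def by (intro phi_nonneg) simp
  then have c1: "c \<le> phi V E k A (alg_init L)" using run by linarith
  have "phi V E k A (alg_init L) = (\<Sum>v\<in>V. real k * A + real k * real (card (nbrs E v)))"
    unfolding phi_def alg_init_def by (simp add: algebra_simps)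
  also have "\<dots> = real k * A * real (card V) + real k * real (\<Sum>v\<in>V. card (nbrs E v))"
    by (simp add: sum.distrib sum_distrib_left)
  also have "\<dots> \<le> real k * A * real (card V) + real k * real (2 * card E)"
    using handshake[OF fV EV] by (intro add_left_mono mult_left_mono) (simp_all only: of_nat_le_iff of_nat_0_le_iff)
  finally have c2: "c \<le> real k * A * real (card V) + 2 * (real k * real (card E))"
    using c1 by simp
  have cL: "card L \<le> card V" using LV fV by (rule card_mono[rotated])
  have ic: "init_cost V L \<le> 3 * real (card V)" unfolding init_cost_def using cL by simp
  define x where "x = real k * real (card V)"
  have x0: "x \<ge> 0" unfolding x_def by simp
  have "real (card V) \<le> x" unfolding x_def using k1
    by (simp add: mult_le_cancel_right1)
  moreover have "x \<le> x * M" using M1 x0 by (simp add: mult_le_cancel_left1)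
  ultimately have "3 * real (card V) \<le> 3 * x * M" by linarith
  moreover have "real k * A * real (card V) \<le> 5 * x * M"
  proof -
    have "A \<le> 5 * M" unfolding A_def using M0M M1 by linarith
    then have "x * A \<le> x * (5 * M)" using x0 by (rule mult_left_mono)
    then show ?thesis unfolding x_def by (simp add: algebra_simps)
  qed
  ultimately have "init_cost V L + c \<le> 8 * x * M + 2 * (real k * real (card E))"
    using ic c2 by linarith
  also have "\<dots> \<le> 8 * (real k * real (card E) + real k * real (card V) * M)"
    unfolding x_def by (simp add: algebra_simps)
  finally show "init_cost V L + c \<le> 8 * (real k * real (card E) + real k * real (card V) * max 1 (log 2 (real (card V))))"
    unfolding M_def .
qed simp

end
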